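(* Let $A$ be an $n\times n$ real matrix whose eigenvalues are all distinct, and let $p\geq 1$ be an integer. Then the following are equivalent: (i) there exists a real $n\times n$ diagonal matrix $B_d$ with at most $k$ nonzero entries such that the system $\frac{dx(t)}{dt}=Ax(t)+B_d u(t)$ is controllable; (ii) there exists a real $n\times p$ matrix $B_f$ with at most $k$ nonzero entries such that the system $\frac{dx(t)}{dt}=Ax(t)+B_f u(t)$ is controllable.
   Context: Controllability refers to the usual notion for continuous-time linear time-invariant systems $\frac{dx}{dt}=Ax+Bu$ (controllability of the pair $(A,B)$). A vector or matrix is called $k$-sparse if it has at most $k$ nonzero entries; the paper phrases (i) as "the system $\Sigma_d$ is $k$-sparse controllable" and (ii) as "the system $\Sigma_f$ is $k$-sparse controllable". *)

theory Defs
  imports "HOL-Analysis.Analysis"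
begin

definition matpow :: "real^'n^'n \<Rightarrow> nat \<Rightarrow> real^'n^'n" where
  "matpow A i = ((\<lambda>M. A ** M) ^^ i) (mat 1)"

text \<open>Controllability of the pair (A,B) of dx/dt = A x + B u (Kalman criterion):
  the columns of the controllability matrix [B, AB, ..., A^(n-1) B] span R^n.\<close>
definition controllable :: "real^'n^'n \<Rightarrow> real^'m^'n \<Rightarrow> bool" where
  "controllable A B \<longleftrightarrow>
     span (\<Union>i\<in>{..<CARD('n)}. columns (matpow A i ** B)) = (UNIV :: (real^'n) set)"

definition sparse_mat :: "nat \<Rightarrow> real^'m^'n \<Rightarrow> bool" where
  "sparse_mat k M \<longleftrightarrow> card {(i, j). M $ i $ j \<noteq> 0} \<le> k"

definition diagonal_mat :: "real^'n^'n \<Rightarrow> bool" where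
  "diagonal_mat M \<longleftrightarrow> (\<forall>i j. i \<noteq> j \<longrightarrow> M $ i $ j = 0)"

text \<open>All (complex) eigenvalues of A are distinct: the characteristic polynomial
  det(z I - A) has exactly n distinct complex roots.\<close>
definition distinct_eigenvalues :: "real^'n^'n \<Rightarrow> bool" where
  "distinct_eigenvalues A \<longleftrightarrow>
     card {z :: complex. det (mat z - map_matrix complex_of_real A) = 0} = CARD('n)"

end

theory Submission imports Defs begin

definition cv :: "real^'n \<Rightarrow> complex^'n" where "cv x = (\<chi> i. complex_of_real (x$i))"
definition dotc :: "complex^'n \<Rightarrow> complex^'n \<Rightarrow> complex" where "dotc u v = (\<Sum>i\<in>UNIV. u$i * v$i)"
definition cmat :: "real^'n^'n \<Rightarrow> complex^'n^'n" where "cmat A = map_matrix complex_of_real A"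

lemma cmat_mv: "cmat A *v cv x = cv (A *v x)"
  by (simp add: cmat_def cv_def vec_eq_iff matrix_vector_mult_def map_matrix_def)

lemma dotc_vm: "dotc (u v* M) v = dotc u (M *v v)"
proof -
  have "dotc (u v* M) v = (\<Sum>i\<in>UNIV. \<Sum>j\<in>UNIV. u$j * M$j$i * v$i)"
    by (simp add: dotc_def vector_matrix_mult_def sum_distrib_right)
  also have "\<dots> = (\<Sum>j\<in>UNIV. \<Sum>i\<in>UNIV. u$j * M$j$i * v$i)"
    by (rule sum.swap)
  also have "\<dots> = dotc u (M *v v)"
    by (simp add: dotc_def matrix_vector_mult_def sum_distrib_left mult.assoc)
  finally show ?thesis .
qed

lemma dotc_cv_real: "dotc (cv y) (cv x) = complex_of_real (y \<bullet> x)"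
  by (simp add: dotc_def cv_def inner_vec_def)

lemma dotc_diff2: "dotc u (v - w) = dotc u v - dotc u w"
  by (simp add: dotc_def algebra_simps sum_subtractf)

lemma dotc_scale2: "dotc u (c *s v) = c * dotc u v"
  by (simp add: dotc_def sum_distrib_left algebra_simps)

lemma vm_diff: "w v* (M - N) = w v* M - w v* (N::complex^'n^'n)"
  by (simp add: vec_eq_iff vector_matrix_mult_def algebra_simps sum_subtractf)

lemma vm_mat: "w v* mat c = c *s (w::complex^'n)"
  by (simp add: vec_eq_iff vector_matrix_mult_def mat_def if_distrib cong: if_cong)

lemma vm_scale: "(c *s w) v* M = c *s (w v* (M::complex^'n^'n))"
  by (simp add: vec_eq_iff vector_matrix_mult_def sum_distrib_left algebra_simps)

lemma vm_sum: "finite S \<Longrightarrow> (\<Sum>x\<in>S. f x) v* (M::complex^'n^'n) = (\<Sum>x\<in>S. f x v* M)"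
  by (induction S rule: finite_induct) (simp_all add: vec_eq_iff vector_matrix_mult_def algebra_simps sum.distrib)

lemma left_eigvec:
  fixes M :: "complex^'n^'n"
  assumes "det (mat z - M) = 0"
  shows "\<exists>w. w \<noteq> 0 \<and> w v* M = z *s w"
proof -
  let ?N = "transpose (mat z - M)"
  have "det (matrix ((*v) ?N)) = 0" using assms by simp
  then have "\<not> inj ((*v) ?N)"
    using det_nz_iff_inj_gen[of "(*v) ?N"] matrix_vector_mul_linear_gen by blast
  then obtain x y where "x \<noteq> y" "?N *v x = ?N *v y" unfolding inj_def by blast
  then have "?N *v (x - y) = 0" "x - y \<noteq> 0" by (simp_all add: matrix_vector_mult_diff_distrib)
  moreover have "?N *v (x - y) = (x - y) v* (mat z - M)"
    by (simp add: transpose_matrix_vector)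
  ultimately show ?thesis
    by (metis eq_iff_diff_eq_0 vm_diff vm_mat)
qed

lemma column_mult: "column j (M ** B) = M *v column j (B::'a::comm_semiring_1^'p^'n)"
  by (simp add: vec_eq_iff column_def matrix_matrix_mult_def matrix_vector_mult_def)

lemma matpow_Suc: "matpow A (Suc i) = A ** matpow A i"
  by (simp add: matpow_def)

lemma matpow_0: "matpow A 0 = mat 1"
  by (simp add: matpow_def)

lemma matpow_Suc_mv: "matpow A (Suc i) *v b = A *v (matpow A i *v b)"
  by (simp add: matpow_Suc matrix_vector_mul_assoc)

lemma dotc_mat_mv: "dotc u ((M - mat c) *v v) = dotc u (M *v v) - c * dotc u (v::complex^'n)"
proof -
  have "(mat c *v v) $ i = (c *s v) $ i" for i
  proof -
    have "(mat c *v v) $ i = (\<Sum>j\<in>UNIV. (if i = j then c else 0) * v $ j)"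
      by (simp add: matrix_vector_mult_def mat_def)
    also have "\<dots> = (\<Sum>j\<in>UNIV. (if i = j then c * v $ j else 0))"
      by (rule sum.cong) auto
    also have "\<dots> = c * v $ i" by simp
    finally show ?thesis by simp
  qed
  then have "mat c *v v = c *s v" by (simp add: vec_eq_iff)
  then have "(M - mat c) *v v = M *v v - c *s v"
    by (simp add: matrix_vector_mult_diff_rdistrib)
  then show ?thesis by (simp add: dotc_diff2 dotc_scale2)
qed

lemma eig_pow:
  assumes "w v* cmat A = z *s w"
  shows "dotc w (cv (matpow A i *v x)) = z ^ i * dotc w (cv x)"
proof (induction i)
  case 0
  then show ?case by (simp add: matpow_0)
next
  case (Suc i)
  have "dotc w (cv (matpow A (Suc i) *v x)) = dotc w (cmat A *v cv (matpow A i *v x))"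
    by (simp add: matpow_Suc_mv cmat_mv)
  also have "\<dots> = dotc (w v* cmat A) (cv (matpow A i *v x))"
    by (simp only: dotc_vm)
  also have "\<dots> = z * dotc w (cv (matpow A i *v x))"
    by (simp add: assms dotc_def sum_distrib_left mult.assoc)
  finally show ?case using Suc by simp
qed

definition Pl :: "complex^'n^'n \<Rightarrow> complex list \<Rightarrow> complex^'n^'n" where
  "Pl M L = foldr (\<lambda>\<nu> P. P ** (M - mat \<nu>)) L (mat 1)"

definition pr :: "complex list \<Rightarrow> complex \<Rightarrow> complex" where
  "pr L z = prod_list (map (\<lambda>\<nu>. z - \<nu>) L)"

lemma Pl_eig:
  assumes "w v* M = z *s w"
  shows "w v* Pl M L = pr L z *s w"
proof (induction L)
  case Nil
  then show ?case by (simp add: Pl_def pr_def vm_mat)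
next
  case (Cons \<nu> L)
  have "w v* Pl M (\<nu> # L) = (w v* Pl M L) v* (M - mat \<nu>)"
    by (simp add: Pl_def vector_matrix_mul_assoc)
  also have "\<dots> = pr L z *s (z *s w - \<nu> *s w)"
    using Cons by (simp add: vm_scale vm_diff vm_mat assms)
  also have "\<dots> = pr (\<nu> # L) z *s w"
    by (simp add: pr_def vec_eq_iff algebra_simps)
  finally show ?case .
qed

lemma Pl_krylov:
  fixes A :: "real^'n^'n"
  assumes "\<forall>i<m. y \<bullet> (matpow A i *v b) = 0"
  shows "length L + i < m \<Longrightarrow> dotc (cv y v* Pl (cmat A) L) (cv (matpow A i *v b)) = 0"
proof (induction L arbitrary: i)
  case Nil
  then show ?case using assms by (simp add: Pl_def vm_mat dotc_cv_real)
next
  case (Cons \<nu> L)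
  have "dotc (cv y v* Pl (cmat A) (\<nu> # L)) (cv (matpow A i *v b))
     = dotc (cv y v* Pl (cmat A) L) ((cmat A - mat \<nu>) *v cv (matpow A i *v b))"
    by (simp add: Pl_def vector_matrix_mul_assoc[symmetric] dotc_vm)
  also have "\<dots> = dotc (cv y v* Pl (cmat A) L) (cv (matpow A (Suc i) *v b))
        - \<nu> * dotc (cv y v* Pl (cmat A) L) (cv (matpow A i *v b))"
    by (simp add: dotc_mat_mv cmat_mv matpow_Suc_mv)
  also have "\<dots> = 0" using Cons by simp
  finally show ?case .
qed

lemma scale_cancel:
  fixes w :: "complex^'n"
  assumes "a *s w = c *s w" "w \<noteq> 0"
  shows "a = c"
proof -
  obtain k where "w $ k \<noteq> 0" using assms(2) by (auto simp: vec_eq_iff)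
  show ?thesis using assms by simp
qed

lemma cyclic:
  fixes A :: "real^'n^'n" and b :: "real^'n" and \<Lambda> :: "complex set"
  assumes fin: "finite \<Lambda>" and cardL: "card \<Lambda> = CARD('n)"
    and w: "\<And>z. z \<in> \<Lambda> \<Longrightarrow> w z \<noteq> 0 \<and> w z v* cmat A = z *s w z"
    and nz: "\<And>z. z \<in> \<Lambda> \<Longrightarrow> dotc (w z) (cv b) \<noteq> 0"
  shows "span ((\<lambda>i. matpow A i *v b) ` {..<CARD('n)}) = UNIV"
proof (rule ccontr)
  let ?m = "CARD('n)"
  assume ns: "span ((\<lambda>i. matpow A i *v b) ` {..<CARD('n)}) \<noteq> UNIV"
  have "\<forall>\<mu>\<in>\<Lambda>. \<exists>L. set L = \<Lambda> - {\<mu>} \<and> distinct L"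
    using fin by (simp add: finite_distinct_list)
  then obtain Lf where Lf: "\<And>\<mu>. \<mu> \<in> \<Lambda> \<Longrightarrow> set (Lf \<mu>) = \<Lambda> - {\<mu>} \<and> distinct (Lf \<mu>)"
    by metis
  have lenL: "length (Lf \<mu>) < ?m" if "\<mu> \<in> \<Lambda>" for \<mu>
  proof -
    have "length (Lf \<mu>) = card (\<Lambda> - {\<mu>})" using Lf[OF that] distinct_card by metis
    also have "\<dots> < card \<Lambda>" by (rule card_Diff1_less[OF fin that])
    finally show ?thesis using cardL by simp
  qed
  have pr_nz: "pr (Lf \<mu>) \<mu> \<noteq> 0" if "\<mu> \<in> \<Lambda>" for \<mu>
  proof
    assume "pr (Lf \<mu>) \<mu> = 0"
    then have "0 \<in> set (map (\<lambda>\<nu>. \<mu> - \<nu>) (Lf \<mu>))" unfolding pr_def by (rule prod_list_zero_iff[THEN iffD1])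
    then obtain \<nu> where "\<nu> \<in> set (Lf \<mu>)" "0 = \<mu> - \<nu>" by (metis (no_types, lifting) imageE set_map)
    then show False using Lf[OF that] by simp
  qed
  have pr_z: "pr (Lf \<mu>) z = 0" if "\<mu> \<in> \<Lambda>" "z \<in> \<Lambda>" "z \<noteq> \<mu>" for \<mu> z
  proof -
    have "z \<in> set (Lf \<mu>)" using Lf[OF that(1)] that by simp
    then have "0 \<in> set (map (\<lambda>\<nu>. z - \<nu>) (Lf \<mu>))" by force
    then show ?thesis unfolding pr_def by (rule prod_list_zero_iff[THEN iffD2])
  qed
  have key: "(\<Sum>z\<in>\<Lambda>. \<alpha> z *s w z) v* Pl (cmat A) (Lf \<mu>) = (\<alpha> \<mu> * pr (Lf \<mu>) \<mu>) *s w \<mu>"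
    if "\<mu> \<in> \<Lambda>" for \<alpha> \<mu>
  proof -
    have "(\<Sum>z\<in>\<Lambda>. \<alpha> z *s w z) v* Pl (cmat A) (Lf \<mu>) = (\<Sum>z\<in>\<Lambda>. (\<alpha> z * pr (Lf \<mu>) z) *s w z)"
      using fin by (simp add: vm_sum vm_scale Pl_eig[OF conjunct2[OF w]] cong: sum.cong)
    also have "\<dots> = (\<alpha> \<mu> * pr (Lf \<mu>) \<mu>) *s w \<mu> + (\<Sum>z\<in>\<Lambda> - {\<mu>}. (\<alpha> z * pr (Lf \<mu>) z) *s w z)"
      using fin that by (simp add: sum.remove)
    also have "(\<Sum>z\<in>\<Lambda> - {\<mu>}. (\<alpha> z * pr (Lf \<mu>) z) *s w z) = 0"
      using pr_z[OF that] by (intro sum.neutral) auto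
    finally show ?thesis by simp
  qed
  have injw: "inj_on w \<Lambda>"
  proof (rule inj_onI)
    fix x y assume "x \<in> \<Lambda>" "y \<in> \<Lambda>" "w x = w y"
    then have "x *s w x = y *s w x" "w x \<noteq> 0" using w[of x] w[of y] by metis+
    then show "x = y" by (rule scale_cancel)
  qed
  have indep: "vec.independent (w ` \<Lambda>)"
  proof
    assume "vec.dependent (w ` \<Lambda>)"
    then obtain u where u: "(\<Sum>v\<in>w ` \<Lambda>. u v *s v) = 0" "\<exists>v\<in>w ` \<Lambda>. u v \<noteq> 0"
      using vec.dependent_finite[OF finite_imageI[OF fin]] by blast
    then obtain \<mu> where \<mu>: "\<mu> \<in> \<Lambda>" "u (w \<mu>) \<noteq> 0" by blast
    have "(\<Sum>z\<in>\<Lambda>. u (w z) *s w z) = 0" using u(1) sum.reindex[OF injw, of "\<lambda>v. u v *s v"] by simp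
    then have "(u (w \<mu>) * pr (Lf \<mu>) \<mu>) *s w \<mu> = 0"
      using key[OF \<mu>(1), of "\<lambda>z. u (w z)"] by simp
    then show False using \<mu> pr_nz[OF \<mu>(1)] w[OF \<mu>(1)] by (simp add: vector_mul_eq_0)
  qed
  have spanw: "vec.span (w ` \<Lambda>) = UNIV"
  proof -
    have "card (w ` \<Lambda>) = ?m" using card_image[OF injw] cardL by simp
    then have "vec.dim (UNIV :: (complex^'n) set) \<le> card (w ` \<Lambda>)"
      using vec_dim_card[where 'a=complex and 'n='n] by simp
    then have "UNIV \<subseteq> vec.span (w ` \<Lambda>)"
      by (rule vec.card_ge_dim_independent[OF subset_UNIV indep])
    then show ?thesis by auto
  qed
  obtain y :: "real^'n" where y: "y \<noteq> 0" "span ((\<lambda>i. matpow A i *v b) ` {..<CARD('n)}) \<subseteq> {x. y \<bullet> x = 0}"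
    using span_not_univ_subset_hyperplane[OF ns] by blast
  have orth: "\<forall>i<?m. y \<bullet> (matpow A i *v b) = 0"
  proof (intro allI impI)
    fix i assume "i < ?m"
    then have "matpow A i *v b \<in> span ((\<lambda>i. matpow A i *v b) ` {..<CARD('n)})"
      by (intro span_base imageI) simp
    then show "y \<bullet> (matpow A i *v b) = 0" using y(2) by blast
  qed
  have "cv y \<in> range (\<lambda>u. \<Sum>v\<in>w ` \<Lambda>. u v *s v)"
    using spanw vec.span_finite[OF finite_imageI[OF fin]] by blast
  then obtain u where "(\<Sum>v\<in>w ` \<Lambda>. u v *s v) = cv y"
    by (metis (no_types, lifting) rangeE)
  then have yexp: "cv y = (\<Sum>z\<in>\<Lambda>. u (w z) *s w z)"
    using sum.reindex[OF injw, of "\<lambda>v. u v *s v"] by simp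
  have a0: "u (w \<mu>) = 0" if "\<mu> \<in> \<Lambda>" for \<mu>
  proof -
    have "0 = dotc (cv y v* Pl (cmat A) (Lf \<mu>)) (cv (matpow A 0 *v b))"
      using Pl_krylov[OF orth, of "Lf \<mu>" 0] lenL[OF that] by simp
    also have "\<dots> = dotc ((u (w \<mu>) * pr (Lf \<mu>) \<mu>) *s w \<mu>) (cv b)"
      unfolding yexp key[OF that] matpow_0 matrix_vector_mul_lid ..
    also have "\<dots> = (u (w \<mu>) * pr (Lf \<mu>) \<mu>) * dotc (w \<mu>) (cv b)"
      by (simp add: dotc_def sum_distrib_left mult.assoc)
    finally show ?thesis using pr_nz[OF that] nz[OF that] by simp
  qed
  have "cv y = 0" unfolding yexp using a0 by simp
  then have "y = 0" by (simp add: cv_def vec_eq_iff)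
  then show False using y(1) by simp
qed


lemma in_ctrl_span:
  fixes A :: "real^'n^'n" and B :: "real^'m^'n"
  assumes "i < CARD('n)"
  shows "column j (matpow A i ** B) \<in> span (\<Union>i\<in>{..<CARD('n)}. columns (matpow A i ** B))"
proof -
  have "column j (matpow A i ** B) \<in> columns (matpow A i ** B)"
    unfolding columns_def by blast
  then show ?thesis using assms by (intro span_base) blast
qed

lemma dir2:
  fixes A :: "real^'n^'n" and Bf :: "real^'p^'n"
  assumes sp: "sparse_mat k Bf" and ct: "controllable A Bf"
  shows "\<exists>Bd :: real^'n^'n. diagonal_mat Bd \<and> sparse_mat k Bd \<and> controllable A Bd"
proof -
  define S where "S = fst ` {(i, j). Bf $ i $ j \<noteq> 0}"
  define Bd :: "real^'n^'n" where "Bd = (\<chi> i j. if i = j \<and> i \<in> S then 1 else 0)"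
  have diag: "diagonal_mat Bd" by (simp add: diagonal_mat_def Bd_def)
  have "{(i, j). Bd $ i $ j \<noteq> 0} = (\<lambda>i. (i, i)) ` S" by (auto simp: Bd_def)
  then have "card {(i, j). Bd $ i $ j \<noteq> 0} \<le> card S" by (simp add: card_image_le)
  also have "card S \<le> card {(i, j). Bf $ i $ j \<noteq> 0}" unfolding S_def by (rule card_image_le) simp
  also have "\<dots> \<le> k" using sp by (simp add: sparse_mat_def)
  finally have spd: "sparse_mat k Bd" by (simp add: sparse_mat_def)
  have colBf: "column j Bf = (\<Sum>s\<in>S. Bf $ s $ j *\<^sub>R column s Bd)" for j
  proof (subst vec_eq_iff, intro allI)
    fix t
    have "(\<Sum>s\<in>S. Bf $ s $ j *\<^sub>R column s Bd) $ t = (\<Sum>s\<in>S. Bf $ s $ j * (if t = s then 1 else 0))"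
      by (rule trans[OF sum_component sum.cong]) (auto simp: column_def Bd_def)
    also have "\<dots> = (\<Sum>s\<in>S. (if s = t then Bf $ t $ j else 0))"
      by (rule sum.cong) auto
    also have "\<dots> = (if t \<in> S then Bf $ t $ j else 0)" by simp
    also have "\<dots> = Bf $ t $ j"
    proof -
      have "Bf $ t $ j \<noteq> 0 \<Longrightarrow> t \<in> S" unfolding S_def by force
      then show ?thesis by auto
    qed
    finally show "column j Bf $ t = (\<Sum>s\<in>S. Bf $ s $ j *\<^sub>R column s Bd) $ t"
      by (simp add: column_def)
  qed
  have sub: "(\<Union>i\<in>{..<CARD('n)}. columns (matpow A i ** Bf))
      \<subseteq> span (\<Union>i\<in>{..<CARD('n)}. columns (matpow A i ** Bd))"
  proof
    fix x assume "x \<in> (\<Union>i\<in>{..<CARD('n)}. columns (matpow A i ** Bf))"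
    then obtain i j where ij: "i < CARD('n)" "x = column j (matpow A i ** Bf)"
      unfolding columns_def by blast
    have "x = matpow A i *v (\<Sum>s\<in>S. Bf $ s $ j *\<^sub>R column s Bd)"
      using ij(2) colBf column_mult by metis
    also have "\<dots> = (\<Sum>s\<in>S. Bf $ s $ j *\<^sub>R (matpow A i *v column s Bd))"
      by (simp add: linear_sum[OF matrix_vector_mul_linear] matrix_vector_mult_scaleR)
    also have "\<dots> = (\<Sum>s\<in>S. Bf $ s $ j *\<^sub>R column s (matpow A i ** Bd))"
      by (simp add: column_mult)
    finally show "x \<in> span (\<Union>i\<in>{..<CARD('n)}. columns (matpow A i ** Bd))"
      using in_ctrl_span[OF ij(1)] by (auto intro!: span_sum span_mul)
  qed
  have "span (\<Union>i\<in>{..<CARD('n)}. columns (matpow A i ** Bf))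
      \<subseteq> span (\<Union>i\<in>{..<CARD('n)}. columns (matpow A i ** Bd))"
    using span_minimal[OF sub subspace_span] .
  then have "controllable A Bd" using ct by (auto simp: controllable_def)
  then show ?thesis using diag spd by blast
qed

lemma cv_add: "cv (x + y) = cv x + cv y" by (simp add: cv_def vec_eq_iff)
lemma cv_scale: "cv (c *\<^sub>R x) = complex_of_real c *s cv x" by (simp add: cv_def vec_eq_iff)
lemma cv_zero: "cv 0 = 0" by (simp add: cv_def vec_eq_iff)
lemma dotc_add2: "dotc u (v + x) = dotc u v + dotc u x" by (simp add: dotc_def algebra_simps sum.distrib)
lemma dotc_zero2: "dotc u 0 = 0" by (simp add: dotc_def)

lemma subspace_ann: "subspace {x. dotc w (cv x) = 0}"
  by (simp add: subspace_def cv_add cv_scale cv_zero dotc_add2 dotc_zero2 dotc_scale2)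

lemma dir1:
  fixes A :: "real^'n^'n" and Bd :: "real^'n^'n"
  assumes de: "distinct_eigenvalues A" and dg: "diagonal_mat Bd" and sp: "sparse_mat k Bd"
    and ct: "controllable A Bd"
  shows "\<exists>Bf :: real^'p^'n. sparse_mat k Bf \<and> controllable A Bf"
proof -
  define \<Lambda> where "\<Lambda> = {z::complex. det (mat z - cmat A) = 0}"
  have cardL: "card \<Lambda> = CARD('n)" using de by (simp add: distinct_eigenvalues_def \<Lambda>_def cmat_def)
  have "CARD('n) > 0" by simp
  then have fin: "finite \<Lambda>" using cardL card_ge_0_finite[of \<Lambda>] by simp
  have "\<forall>z\<in>\<Lambda>. \<exists>w. w \<noteq> 0 \<and> w v* cmat A = z *s w" using left_eigvec unfolding \<Lambda>_def by blast
  then obtain w where w: "\<And>z. z \<in> \<Lambda> \<Longrightarrow> w z \<noteq> 0 \<and> w z v* cmat A = z *s w z" by metis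
  define S where "S = {j. Bd $ j $ j \<noteq> 0}"
  have supp: "\<exists>j\<in>S. w z $ j \<noteq> 0" if z: "z \<in> \<Lambda>" for z
  proof (rule ccontr)
    assume "\<not> (\<exists>j\<in>S. w z $ j \<noteq> 0)"
    then have ws: "\<And>j. Bd $ j $ j \<noteq> 0 \<Longrightarrow> w z $ j = 0" by (auto simp: S_def)
    have col0: "dotc (w z) (cv (column j Bd)) = 0" for j
    proof -
      have "dotc (w z) (cv (column j Bd)) = (\<Sum>k\<in>UNIV. w z $ k * complex_of_real (Bd $ k $ j))"
        by (simp add: dotc_def cv_def column_def)
      also have "\<dots> = (\<Sum>k\<in>UNIV. if k = j then w z $ j * complex_of_real (Bd $ j $ j) else 0)"
        by (rule sum.cong) (auto simp: dg[unfolded diagonal_mat_def])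
      also have "\<dots> = 0" using ws[of j] by (cases "Bd $ j $ j = 0") auto
      finally show ?thesis .
    qed
    have "(\<Union>i\<in>{..<CARD('n)}. columns (matpow A i ** Bd)) \<subseteq> {x. dotc (w z) (cv x) = 0}"
    proof
      fix x assume "x \<in> (\<Union>i\<in>{..<CARD('n)}. columns (matpow A i ** Bd))"
      then obtain i j where "x = column j (matpow A i ** Bd)" unfolding columns_def by blast
      then have "x = matpow A i *v column j Bd" by (simp add: column_mult)
      then show "x \<in> {x. dotc (w z) (cv x) = 0}"
        using eig_pow[OF conjunct2[OF w[OF z]]] col0 by simp
    qed
    then have "span (\<Union>i\<in>{..<CARD('n)}. columns (matpow A i ** Bd)) \<subseteq> {x. dotc (w z) (cv x) = 0}"
      by (rule span_minimal[OF _ subspace_ann])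
    then have all: "dotc (w z) (cv x) = 0" for x using ct by (auto simp: controllable_def)
    have "w z = 0"
    proof (subst vec_eq_iff, intro allI)
      fix k
      have "dotc (w z) (cv (axis k 1)) = (\<Sum>i\<in>UNIV. if i = k then w z $ k else 0)"
        unfolding dotc_def by (rule sum.cong) (auto simp: cv_def axis_def)
      also have "\<dots> = w z $ k" by simp
      finally show "w z $ k = 0 $ k" using all by simp
    qed
    then show False using w[OF z] by simp
  qed
  obtain f :: "'n \<Rightarrow> nat" and N where f: "f ` UNIV = {i. i < N}" "inj f"
    using finite_imp_inj_to_nat_seg[of "UNIV::'n set"] by auto
  have fN: "f j \<le> N" for j
  proof -
    have "f j \<in> {i. i < N}" using f(1) by blast
    then show ?thesis by simp
  qed
  define c where "c z i = (\<Sum>j\<in>S. if f j = i then w z $ j else 0)" for z i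
  have polyeq: "(\<Sum>i\<le>N. c z i * x^i) = (\<Sum>j\<in>S. w z $ j * x ^ f j)" for z x
  proof -
    have "(\<Sum>i\<le>N. c z i * x^i) = (\<Sum>i\<le>N. \<Sum>j\<in>S. if f j = i then w z $ j * x ^ i else 0)"
      unfolding c_def sum_distrib_right by (intro sum.cong refl) auto
    also have "\<dots> = (\<Sum>j\<in>S. \<Sum>i\<le>N. if f j = i then w z $ j * x ^ i else 0)" by (rule sum.swap)
    also have "\<dots> = (\<Sum>j\<in>S. w z $ j * x ^ f j)" using fN by (intro sum.cong refl) (simp add: sum.delta')
    finally show ?thesis .
  qed
  have rootsfin: "finite {x::complex. (\<Sum>i\<le>N. c z i * x^i) = 0}" if zL: "z \<in> \<Lambda>" for z
  proof -
    obtain j0 where j0: "j0 \<in> S" "w z $ j0 \<noteq> 0" using supp[OF zL] by blast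
    have "c z (f j0) = (\<Sum>j\<in>S. if j = j0 then w z $ j else 0)"
      unfolding c_def using f(2) by (intro sum.cong refl) (auto dest: injD)
    also have "\<dots> = w z $ j0" using j0(1) by simp
    finally have "c z (f j0) \<noteq> 0" using j0 by simp
    then show ?thesis using polyfun_roots_finite[of "c z" "f j0" N] fN by simp
  qed
  define Bad where "Bad = (\<Union>z\<in>\<Lambda>. {x::complex. (\<Sum>i\<le>N. c z i * x^i) = 0})"
  have "finite Bad" using fin rootsfin by (simp add: Bad_def)
  then have "finite (complex_of_real -` Bad)" by (rule finite_vimageI) (simp add: inj_on_def)
  then obtain t :: real where t: "t \<notin> complex_of_real -` Bad"
    using ex_new_if_finite[OF infinite_UNIV_char_0] by blast
  define b :: "real^'n" where "b = (\<chi> j. if j \<in> S then t ^ f j else 0)"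
  have nz: "dotc (w z) (cv b) \<noteq> 0" if "z \<in> \<Lambda>" for z
  proof -
    have "dotc (w z) (cv b) = (\<Sum>j\<in>UNIV. if j \<in> S then w z $ j * complex_of_real t ^ f j else 0)"
      unfolding dotc_def by (intro sum.cong refl) (simp add: b_def cv_def)
    also have "\<dots> = (\<Sum>j\<in>S. w z $ j * complex_of_real t ^ f j)"
      by (simp add: sum.If_cases)
    also have "\<dots> = (\<Sum>i\<le>N. c z i * (complex_of_real t)^i)" by (simp add: polyeq)
    finally show ?thesis using t that by (auto simp: Bad_def)
  qed
  have cyc: "span ((\<lambda>i. matpow A i *v b) ` {..<CARD('n)}) = UNIV"
    by (rule cyclic[OF fin cardL w nz])
  define j0 :: 'p where "j0 = undefined"
  define Bf :: "real^'p^'n" where "Bf = (\<chi> i j. if j = j0 then b $ i else 0)"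
  have colb: "column j0 Bf = b" by (simp add: Bf_def column_def vec_eq_iff)
  have "(\<lambda>i. matpow A i *v b) ` {..<CARD('n)} \<subseteq> span (\<Union>i\<in>{..<CARD('n)}. columns (matpow A i ** Bf))"
  proof
    fix x assume "x \<in> (\<lambda>i. matpow A i *v b) ` {..<CARD('n)}"
    then obtain i where "i < CARD('n)" "x = matpow A i *v b" by blast
    then show "x \<in> span (\<Union>i\<in>{..<CARD('n)}. columns (matpow A i ** Bf))"
      using in_ctrl_span[of i j0 A Bf] by (simp add: column_mult colb)
  qed
  then have "span ((\<lambda>i. matpow A i *v b) ` {..<CARD('n)}) \<subseteq> span (\<Union>i\<in>{..<CARD('n)}. columns (matpow A i ** Bf))"
    by (rule span_minimal[OF _ subspace_span])
  then have ctf: "controllable A Bf" using cyc by (auto simp: controllable_def)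
  have "{(i, j). Bf $ i $ j \<noteq> 0} \<subseteq> (\<lambda>i. (i, j0)) ` S"
    by (auto simp: Bf_def b_def split: if_splits)
  then have "card {(i, j). Bf $ i $ j \<noteq> 0} \<le> card ((\<lambda>i. (i, j0)) ` S)"
    by (intro card_mono) auto
  also have "\<dots> \<le> card S" by (rule card_image_le) simp
  also have "card S = card ((\<lambda>j. (j, j)) ` S)" by (simp add: card_image inj_on_def)
  also have "\<dots> \<le> card {(i, j). Bd $ i $ j \<noteq> 0}" by (intro card_mono) (auto simp: S_def)
  also have "\<dots> \<le> k" using sp by (simp add: sparse_mat_def)
  finally have "sparse_mat k Bf" by (simp add: sparse_mat_def)
  then show ?thesis using ctf by blast
qed

theorem corollary1:
  fixes A :: "real^'n^'n" and k :: nat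
  assumes "distinct_eigenvalues A"
  shows "(\<exists>Bd :: real^'n^'n. diagonal_mat Bd \<and> sparse_mat k Bd \<and> controllable A Bd)
     \<longleftrightarrow> (\<exists>Bf :: real^'p^'n. sparse_mat k Bf \<and> controllable A Bf)"
  using dir1[OF assms] dir2 by blast

end
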